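(* Let $X,Y$ be independent $\{0,1\}$-valued random variables with distributions $p_X,p_Y$, and let $q_{Z|XY}$ be a channel with finite output alphabet $\mathcal Z$. Let $f:\{0,1\}^2\to\{0,1\}$, $f(u,v)=\max(u,v)$. Suppose that for each $\epsilon\in[0,1]$, $(U_\epsilon,V_\epsilon)$ is a pair of independent $\{0,1\}$-valued random variables, independent of $X$, such that $f(U_\epsilon,V_\epsilon)$ has distribution $p_Y$; for each fixed $(y,u)$, $p_{f(U_\epsilon,V_\epsilon)|U_\epsilon}(y|u)$ is a continuous function of $\epsilon$; and $U_0=0=V_1$, $U_1=f(U_1,V_1)$, $V_0=f(U_0,V_0)$. For each $\epsilon$, let $Y=f(U_\epsilon,V_\epsilon)$ and let $Z$ be generated from $(X,Y)$ through $q_{Z|XY}$ (so the joint distribution is $p_{U_\epsilon}(u)p_{V_\epsilon}(v)p_X(x)\mathbf 1\{y=f(u,v)\}q_{Z|XY}(z|x,y)$). Define $R_1(\epsilon)=I(X;Z|U_\epsilon)$, $R_U(\epsilon)=I(U_\epsilon;Z)$, $R_V(\epsilon)=I(V_\epsilon;Z|U_\epsilon X)$. Then for every $\epsilon\in[0,1]$, $I(XY;Z)=R_1(\epsilon)+R_U(\epsilon)+R_V(\epsilon)$. Moreover, $R_1$ is continuous in $\epsilon$ and its image contains the interval $[I(X;Z),I(X;Z|Y)]$. *)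

theory Defs
  imports Complex_Main
begin

text \<open>Finite-alphabet information measures. A joint distribution is a pmf
  p on a finite sample space 'w; random variables are functions on 'w.\<close>

definition marg :: "('w::finite \<Rightarrow> real) \<Rightarrow> ('w \<Rightarrow> 'a) \<Rightarrow> 'w \<Rightarrow> real" where
  "marg p A w = (\<Sum>w'\<in>UNIV. if A w' = A w then p w' else 0)"

definition cmi :: "('w::finite \<Rightarrow> real) \<Rightarrow> ('w \<Rightarrow> 'a) \<Rightarrow> ('w \<Rightarrow> 'b) \<Rightarrow> ('w \<Rightarrow> 'c) \<Rightarrow> real" where
  "cmi p A B C = (\<Sum>w\<in>UNIV. if p w = 0 then 0 else
      p w * log 2 ((marg p (\<lambda>w. (A w, B w, C w)) w * marg p C w) /
                   (marg p (\<lambda>w. (A w, C w)) w * marg p (\<lambda>w. (B w, C w)) w)))"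

definition mi :: "('w::finite \<Rightarrow> real) \<Rightarrow> ('w \<Rightarrow> 'a) \<Rightarrow> ('w \<Rightarrow> 'b) \<Rightarrow> real" where
  "mi p A B = cmi p A B (\<lambda>_. ())"

definition is_pmf :: "('a::finite \<Rightarrow> real) \<Rightarrow> bool" where
  "is_pmf p \<longleftrightarrow> (\<forall>a. 0 \<le> p a) \<and> (\<Sum>a\<in>UNIV. p a) = 1"

text \<open>Joint pmf of (X,Y,Z): p_X(x) p_Y(y) q(z|x,y); bits are booleans (0 = False).\<close>
definition joint_xyz :: "(bool \<Rightarrow> real) \<Rightarrow> (bool \<Rightarrow> real) \<Rightarrow> (bool \<Rightarrow> bool \<Rightarrow> 'z \<Rightarrow> real)
    \<Rightarrow> bool \<times> bool \<times> 'z \<Rightarrow> real" where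
  "joint_xyz pX pY q = (\<lambda>(x, y, z). pX x * pY y * q x y z)"

definition joint_uvxz :: "(bool \<Rightarrow> real) \<Rightarrow> (bool \<Rightarrow> real) \<Rightarrow> (bool \<Rightarrow> real)
    \<Rightarrow> (bool \<Rightarrow> bool \<Rightarrow> 'z \<Rightarrow> real) \<Rightarrow> bool \<times> bool \<times> bool \<times> 'z \<Rightarrow> real" where
  "joint_uvxz pU pV pX q = (\<lambda>(u, v, x, z). pU u * pV v * pX x * q x (max u v) z)"

end

theory Submission
  imports Defs "HOL-Real_Asymp.Real_Asymp"
begin
lemma xlogx_cont: "continuous_on {0..} (\<lambda>t::real. t * log 2 t)"
proof (rule continuous_on_eq_continuous_within[THEN iffD2], intro ballI)
  fix t :: real assume t: "t \<in> {0..}"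
  show "continuous (at t within {0..}) (\<lambda>t::real. t * log 2 t)"
  proof (cases "t = 0")
    case True
    have "((\<lambda>t::real. t * log 2 t) \<longlongrightarrow> 0) (at_right 0)" unfolding log_def by real_asymp
    then have "((\<lambda>t::real. t * log 2 t) \<longlongrightarrow> 0) (at 0 within {0..})"
      by (simp add: at_within_Ici_at_right)
    then show ?thesis using True by (simp add: continuous_within)
  next
    case False
    then have "t > 0" using t by auto
    have "isCont (\<lambda>t::real. t * (ln t / ln 2)) t"
      using \<open>t > 0\<close> by (intro isCont_mult continuous_ident isCont_divide isCont_ln continuous_const) auto
    then show ?thesis unfolding log_def by (rule continuous_at_imp_continuous_at_within)
  qed
qed

definition Hn :: "('w::finite \<Rightarrow> real) \<Rightarrow> ('w \<Rightarrow> 'a) \<Rightarrow> real" where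
  "Hn p A = (\<Sum>w\<in>UNIV. p w * log 2 (marg p A w))"

lemma marg_ge: assumes "\<forall>w. 0 \<le> p w" shows "p w \<le> marg p A w"
proof -
  have "p w = (if A w = A w then p w else 0)" by simp
  also have "\<dots> \<le> marg p A w" unfolding marg_def
    by (rule member_le_sum[where f="\<lambda>w'. if A w' = A w then p w' else 0"]) (use assms in auto)
  finally show ?thesis .
qed

lemma cmi_alt: assumes "\<forall>w. 0 \<le> p w"
  shows "cmi p A B C = (\<Sum>w\<in>UNIV. p w * (log 2 (marg p (\<lambda>w. (A w, B w, C w)) w) + log 2 (marg p C w)
     - log 2 (marg p (\<lambda>w. (A w, C w)) w) - log 2 (marg p (\<lambda>w. (B w, C w)) w)))"
  unfolding cmi_def
proof (rule sum.cong[OF refl])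
  fix w
  show "(if p w = 0 then 0 else
          p w * log 2 (marg p (\<lambda>w. (A w, B w, C w)) w * marg p C w /
            (marg p (\<lambda>w. (A w, C w)) w * marg p (\<lambda>w. (B w, C w)) w))) =
         p w * (log 2 (marg p (\<lambda>w. (A w, B w, C w)) w) + log 2 (marg p C w) -
            log 2 (marg p (\<lambda>w. (A w, C w)) w) - log 2 (marg p (\<lambda>w. (B w, C w)) w))"
  proof (cases "p w = 0")
    case False
    have "0 \<le> p w" using assms by simp
    with False have pos: "p w > 0" by linarith
    have "marg p (\<lambda>w. (A w, B w, C w)) w > 0" "marg p C w > 0" "marg p (\<lambda>w. (A w, C w)) w > 0"
       "marg p (\<lambda>w. (B w, C w)) w > 0"
      using marg_ge[OF assms, of w] pos by (meson less_le_trans)+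
    then show ?thesis using False by (simp add: log_mult log_divide)
  qed simp
qed

lemma cmi_Hn: assumes "\<forall>w. 0 \<le> p w"
  shows "cmi p A B C = Hn p (\<lambda>w. (A w, B w, C w)) + Hn p C - Hn p (\<lambda>w. (A w, C w)) - Hn p (\<lambda>w. (B w, C w))"
  unfolding cmi_alt[OF assms] Hn_def by (simp add: algebra_simps sum.distrib sum_subtractf)

lemma marg_cong: assumes "\<And>w w'. (A w = A w') = (B w = B w')" shows "marg p A = marg p B"
  unfolding marg_def using assms by (auto intro!: ext)

lemma Hn_cong: assumes "\<And>w w'. (A w = A w') = (B w = B w')" shows "Hn p A = Hn p B"
proof -
  have "marg p A = marg p B" by (rule marg_cong) (rule assms)
  then show ?thesis unfolding Hn_def by simp
qed

lemma Hn_const: assumes "sum p UNIV = 1" shows "Hn p (\<lambda>_. c) = 0"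
  unfolding Hn_def marg_def using assms by simp

lemma marg_inj: assumes "\<And>w w'. A w = A w' \<Longrightarrow> w = w'" shows "marg p A w = p w"
proof -
  have "marg p A w = marg p (\<lambda>w. w) w" by (rule arg_cong[where f="\<lambda>f. f w"], rule marg_cong) (use assms in auto)
  also have "\<dots> = p w" unfolding marg_def by simp
  finally show ?thesis .
qed

lemma sum_prod_UNIV: "(\<Sum>w\<in>(UNIV::('a::finite \<times> 'b::finite) set). f w) = (\<Sum>a\<in>UNIV. \<Sum>b\<in>UNIV. f (a, b))"
  by (simp add: sum.cartesian_product flip: UNIV_Times_UNIV)

lemma sum_bool: "(\<Sum>b\<in>(UNIV::bool set). f b) = f True + f False"
  by (simp add: UNIV_bool add.commute)

lemma sum4: "(\<Sum>w\<in>(UNIV::(bool \<times> bool \<times> bool \<times> 'z::finite) set). f w) =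
   (\<Sum>z\<in>UNIV. f (True,True,True,z) + f (True,True,False,z) + f (True,False,True,z) + f (True,False,False,z)
     + f (False,True,True,z) + f (False,True,False,z) + f (False,False,True,z) + f (False,False,False,z))"
  by (simp add: sum_prod_UNIV sum_bool sum.distrib add_ac)

lemma sum3: "(\<Sum>w\<in>(UNIV::(bool \<times> bool \<times> 'z::finite) set). f w) =
   (\<Sum>z\<in>UNIV. f (True,True,z) + f (True,False,z) + f (False,True,z) + f (False,False,z))"
  by (simp add: sum_prod_UNIV sum_bool sum.distrib add_ac)

lemma pY_eqs:
  assumes "\<And>y. pY y = (\<Sum>(u, v)\<in>UNIV. if max u v = y then pU u * pV v else (0::real))"
  shows "pY True = pU True * pV True + pU True * pV False + pU False * pV True"
    "pY False = pU False * pV False"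
  using assms[of True] assms[of False] by (simp_all add: sum_prod_UNIV sum_bool)

lemma pushforward:
  fixes pU pV pX pY :: "bool \<Rightarrow> real" and q :: "bool \<Rightarrow> bool \<Rightarrow> 'z::finite \<Rightarrow> real"
  assumes "\<And>y. pY y = (\<Sum>(u, v)\<in>UNIV. if max u v = y then pU u * pV v else 0)"
  shows "(\<Sum>w\<in>UNIV. joint_uvxz pU pV pX q w * h (case w of (u,v,x,z) \<Rightarrow> (x, max u v, z)))
       = (\<Sum>w\<in>UNIV. joint_xyz pX pY q w * h w)"
  unfolding sum4 sum3 joint_uvxz_def joint_xyz_def
  by (rule sum.cong) (simp_all add: algebra_simps pY_eqs[OF assms])

lemma marg_alt: "marg p A w = (\<Sum>w'\<in>UNIV. p w' * (if A w' = A w then 1 else 0))"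
  unfolding marg_def by (rule sum.cong) auto

lemma pmf_bool: "is_pmf p \<Longrightarrow> p True + p False = 1"
  unfolding is_pmf_def by (simp add: sum_bool)

lemma pmf_nn: "is_pmf p \<Longrightarrow> 0 \<le> p a"
  unfolding is_pmf_def by simp

lemma pmf_sum: "is_pmf p \<Longrightarrow> sum p UNIV = 1"
  unfolding is_pmf_def by simp

definition sJ :: "(bool \<Rightarrow> real) \<Rightarrow> (bool \<Rightarrow> 'z::finite \<Rightarrow> real) \<Rightarrow> 'z \<Rightarrow> real" where
  "sJ pX t z = (\<Sum>x\<in>UNIV. pX x * t x z)"
definition J :: "(bool \<Rightarrow> real) \<Rightarrow> (bool \<Rightarrow> 'z::finite \<Rightarrow> real) \<Rightarrow> real" where
  "J pX t = (\<Sum>x\<in>UNIV. \<Sum>z\<in>UNIV. pX x * t x z * (log 2 (t x z) - log 2 (sJ pX t z)))"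
definition tU :: "(bool \<Rightarrow> real) \<Rightarrow> (bool \<Rightarrow> bool \<Rightarrow> 'z::finite \<Rightarrow> real) \<Rightarrow> bool \<Rightarrow> bool \<Rightarrow> 'z \<Rightarrow> real" where
  "tU pV q u x z = (\<Sum>v\<in>UNIV. pV v * q x (max u v) z)"

lemma marg_reindex: assumes "inj g" and "{w'. A w' = A w} = range g"
  shows "marg p A w = (\<Sum>i\<in>UNIV. p (g i))"
proof -
  have "marg p A w = sum p {w'. A w' = A w}"
    unfolding marg_def by (simp add: sum.If_cases)
  also have "\<dots> = sum p (range g)" using assms(2) by simp
  also have "\<dots> = (\<Sum>i\<in>UNIV. p (g i))" using assms(1) by (simp add: sum.reindex)
  finally show ?thesis .
qed

definition mb :: "(bool \<Rightarrow> bool \<Rightarrow> 'z \<Rightarrow> real) \<Rightarrow> real \<Rightarrow> bool \<Rightarrow> 'z \<Rightarrow> real" where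
  "mb q b = (\<lambda>x z. b * q x True z + (1 - b) * q x False z)"

locale ctx =
  fixes pU pV pX pY :: "bool \<Rightarrow> real" and q :: "bool \<Rightarrow> bool \<Rightarrow> 'z::finite \<Rightarrow> real"
  assumes pU: "is_pmf pU" and pV: "is_pmf pV" and pX: "is_pmf pX" and pY: "is_pmf pY"
    and q: "\<And>x y. is_pmf (q x y)"
    and fd: "\<And>y. pY y = (\<Sum>(u, v)\<in>UNIV. if max u v = y then pU u * pV v else 0)"
begin

abbreviation "p \<equiv> joint_uvxz pU pV pX q"
abbreviation "P \<equiv> joint_xyz pX pY q"

lemma p_nn: "\<forall>w. 0 \<le> p w"
  unfolding joint_uvxz_def using pU pV pX q by (auto simp: pmf_nn)

lemma P_nn: "\<forall>w. 0 \<le> P w"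
  unfolding joint_xyz_def using pY pX q by (auto simp: pmf_nn)

lemma P_sum: "sum P UNIV = 1"
proof -
  have "sum P UNIV = (\<Sum>x\<in>UNIV. \<Sum>y\<in>UNIV. pX x * pY y * (\<Sum>z\<in>UNIV. q x y z))"
    unfolding joint_xyz_def by (simp add: sum_prod_UNIV sum_distrib_left)
  also have "\<dots> = (pX True + pX False) * (pY True + pY False)"
    using pmf_sum[OF q] by (simp add: sum_bool algebra_simps)
  finally show ?thesis using pmf_bool[OF pX] pmf_bool[OF pY] by simp
qed

lemma pf: "(\<Sum>w\<in>UNIV. p w * h (case w of (u,v,x,z) \<Rightarrow> (x, max u v, z))) = (\<Sum>w\<in>UNIV. P w * h w)"
  by (rule pushforward) (rule fd)

lemma p_sum: "sum p UNIV = 1"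
  using pf[of "\<lambda>_. 1"] P_sum by simp

lemma marg_VUX: "marg p (\<lambda>w. (case w of (u, v, x, z) \<Rightarrow> v, case w of (u, v, x, z) \<Rightarrow> (u, x))) (u,v,x,z)
   = pU u * pV v * pX x"
proof -
  have s: "\<And>a b. (\<Sum>z\<in>UNIV. q a b z) = 1" using pmf_sum[OF q] by simp
  show ?thesis unfolding marg_def sum4 joint_uvxz_def
    by (cases u; cases v; cases x) (simp_all add: sum.distrib s flip: sum_distrib_left)
qed

lemma e5: "Hn p (\<lambda>w. (case w of (u, v, x, z) \<Rightarrow> v, case w of (u, v, x, z) \<Rightarrow> z,
             case w of (u, v, x, z) \<Rightarrow> (u, x))) -
      Hn p (\<lambda>w. (case w of (u, v, x, z) \<Rightarrow> v, case w of (u, v, x, z) \<Rightarrow> (u, x)))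
   = (\<Sum>w\<in>UNIV. p w * log 2 (case w of (u,v,x,z) \<Rightarrow> q x (max u v) z))"
  (is "Hn p ?A - Hn p ?B = _")
proof -
  have "Hn p ?A - Hn p ?B = (\<Sum>w\<in>UNIV. p w * (log 2 (marg p ?A w) - log 2 (marg p ?B w)))"
    by (simp add: Hn_def sum_subtractf right_diff_distrib)
  also have "\<dots> = (\<Sum>w\<in>UNIV. p w * log 2 (case w of (u,v,x,z) \<Rightarrow> q x (max u v) z))"
  proof (rule sum.cong[OF refl], clarify)
    fix u v x z
    have mA: "marg p ?A (u,v,x,z) = p (u,v,x,z)" by (rule marg_inj) auto
    show "p (u,v,x,z) * (log 2 (marg p ?A (u,v,x,z)) - log 2 (marg p ?B (u,v,x,z))) =
          p (u,v,x,z) * log 2 (q x (max u v) z)"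
    proof (cases "p (u,v,x,z) = 0")
      case False
      have nn: "0 \<le> pU u" "0 \<le> pV v" "0 \<le> pX x" "0 \<le> q x (max u v) z"
        using pU pV pX q by (auto simp: pmf_nn)
      have "pU u \<noteq> 0" "pV v \<noteq> 0" "pX x \<noteq> 0" "q x (max u v) z \<noteq> 0"
        using False by (auto simp: joint_uvxz_def)
      with nn have pos: "pU u > 0" "pV v > 0" "pX x > 0" "q x (max u v) z > 0" by auto
      show ?thesis unfolding mA marg_VUX using pos
        by (simp add: joint_uvxz_def log_mult)
    qed simp
  qed
  finally show ?thesis .
qed

lemma marg_XY: "marg P (\<lambda>w. (case w of (x, y, z) \<Rightarrow> (x, y), ())) (x,y,z) = pX x * pY y"
proof -
  have s: "\<And>a b. (\<Sum>z\<in>UNIV. q a b z) = 1" using pmf_sum[OF q] by simp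
  show ?thesis unfolding marg_def sum3 joint_xyz_def
    by (cases x; cases y) (simp_all add: sum.distrib s flip: sum_distrib_left)
qed

lemma e6: "Hn P (\<lambda>w. (case w of (x, y, z) \<Rightarrow> (x, y), case w of (x, y, z) \<Rightarrow> z, ())) -
     Hn P (\<lambda>w. (case w of (x, y, z) \<Rightarrow> (x, y), ()))
   = (\<Sum>w\<in>UNIV. P w * log 2 (case w of (x,y,z) \<Rightarrow> q x y z))"
  (is "Hn P ?A - Hn P ?B = _")
proof -
  have "Hn P ?A - Hn P ?B = (\<Sum>w\<in>UNIV. P w * (log 2 (marg P ?A w) - log 2 (marg P ?B w)))"
    by (simp add: Hn_def sum_subtractf right_diff_distrib)
  also have "\<dots> = (\<Sum>w\<in>UNIV. P w * log 2 (case w of (x,y,z) \<Rightarrow> q x y z))"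
  proof (rule sum.cong[OF refl], clarify)
    fix x y z
    have mA: "marg P ?A (x,y,z) = P (x,y,z)" by (rule marg_inj) auto
    show "P (x,y,z) * (log 2 (marg P ?A (x,y,z)) - log 2 (marg P ?B (x,y,z))) =
          P (x,y,z) * log 2 (q x y z)"
    proof (cases "P (x,y,z) = 0")
      case False
      have nn: "0 \<le> pX x" "0 \<le> pY y" "0 \<le> q x y z"
        using pY pX q by (auto simp: pmf_nn)
      have "pX x \<noteq> 0" "pY y \<noteq> 0" "q x y z \<noteq> 0"
        using False by (auto simp: joint_xyz_def)
      with nn have pos: "pX x > 0" "pY y > 0" "q x y z > 0" by auto
      show ?thesis unfolding mA marg_XY using pos
        by (simp add: joint_xyz_def log_mult)
    qed simp
  qed
  finally show ?thesis .
qed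

lemma e7: "Hn p (\<lambda>w. (case w of (u, v, x, z) \<Rightarrow> z, ())) = Hn P (\<lambda>w. (case w of (x, y, z) \<Rightarrow> z, ()))"
proof -
  define M where "M z0 = (\<Sum>w'\<in>UNIV. P w' * (if (case w' of (x,y,z) \<Rightarrow> z) = z0 then 1 else 0))" for z0
  have m1: "marg p (\<lambda>w. (case w of (u, v, x, z) \<Rightarrow> z, ())) w = M (case w of (u, v, x, z) \<Rightarrow> z)" for w
  proof -
    have "marg p (\<lambda>w. (case w of (u, v, x, z) \<Rightarrow> z, ())) w = (\<Sum>w'\<in>UNIV. p w' *
       (\<lambda>(x,y,z'). if z' = (case w of (u,v,x,z) \<Rightarrow> z) then 1 else 0) (case w' of (u,v,x,z) \<Rightarrow> (x, max u v, z)))"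
      unfolding marg_alt by (rule sum.cong) auto
    also have "\<dots> = (\<Sum>w'\<in>UNIV. P w' * (\<lambda>(x,y,z'). if z' = (case w of (u,v,x,z) \<Rightarrow> z) then 1 else 0) w')"
      by (rule pf)
    also have "\<dots> = M (case w of (u, v, x, z) \<Rightarrow> z)" unfolding M_def by (rule sum.cong) auto
    finally show ?thesis .
  qed
  have m2: "marg P (\<lambda>w. (case w of (x, y, z) \<Rightarrow> z, ())) w = M (case w of (x, y, z) \<Rightarrow> z)" for w
    unfolding marg_alt M_def by (rule sum.cong) auto
  have "Hn p (\<lambda>w. (case w of (u, v, x, z) \<Rightarrow> z, ())) = (\<Sum>w\<in>UNIV. p w * 
      (\<lambda>(x,y,z). log 2 (M z)) (case w of (u,v,x,z) \<Rightarrow> (x, max u v, z)))"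
    unfolding Hn_def m1 by (rule sum.cong) auto
  also have "\<dots> = (\<Sum>w\<in>UNIV. P w * (\<lambda>(x,y,z). log 2 (M z)) w)" by (rule pf)
  also have "\<dots> = Hn P (\<lambda>w. (case w of (x, y, z) \<Rightarrow> z, ()))"
    unfolding Hn_def m2 by (rule sum.cong) auto
  finally show ?thesis .
qed

lemma e8: "(\<Sum>w\<in>UNIV. p w * log 2 (case w of (u,v,x,z) \<Rightarrow> q x (max u v) z))
   = (\<Sum>w\<in>UNIV. P w * log 2 (case w of (x,y,z) \<Rightarrow> q x y z))"
proof -
  have "(\<Sum>w\<in>UNIV. p w * log 2 (case w of (u,v,x,z) \<Rightarrow> q x (max u v) z)) =
     (\<Sum>w\<in>UNIV. p w * (\<lambda>(x,y,z). log 2 (q x y z)) (case w of (u,v,x,z) \<Rightarrow> (x, max u v, z)))"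
    by (rule sum.cong) auto
  also have "\<dots> = (\<Sum>w\<in>UNIV. P w * (\<lambda>(x,y,z). log 2 (q x y z)) w)" by (rule pf)
  also have "\<dots> = (\<Sum>w\<in>UNIV. P w * log 2 (case w of (x,y,z) \<Rightarrow> q x y z))" by (rule sum.cong) auto
  finally show ?thesis .
qed

lemma chain: "mi P (\<lambda>(x, y, z). (x, y)) (\<lambda>(x, y, z). z) =
             cmi p (\<lambda>(u, v, x, z). x) (\<lambda>(u, v, x, z). z) (\<lambda>(u, v, x, z). u)
           + mi p (\<lambda>(u, v, x, z). u) (\<lambda>(u, v, x, z). z)
           + cmi p (\<lambda>(u, v, x, z). v) (\<lambda>(u, v, x, z). z) (\<lambda>(u, v, x, z). (u, x))"
proof -
  have c1: "Hn p (\<lambda>w. (case w of (u, v, x, z) \<Rightarrow> x, case w of (u, v, x, z) \<Rightarrow> z,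
            case w of (u, v, x, z) \<Rightarrow> u)) = Hn p (\<lambda>w. (case w of (u, v, x, z) \<Rightarrow> z,
             case w of (u, v, x, z) \<Rightarrow> (u, x)))" by (rule Hn_cong) auto
  have c2: "Hn p (\<lambda>(u, v, x, z). u) = Hn p (\<lambda>w. (case w of (u, v, x, z) \<Rightarrow> u, ()))"
    by (rule Hn_cong) auto
  have c3: "Hn p (\<lambda>w. (case w of (u, v, x, z) \<Rightarrow> x, case w of (u, v, x, z) \<Rightarrow> u)) =
    Hn p (\<lambda>(u, v, x, z). (u, x))" by (rule Hn_cong) auto
  have c4: "Hn p (\<lambda>w. (case w of (u, v, x, z) \<Rightarrow> z, case w of (u, v, x, z) \<Rightarrow> u)) =
    Hn p (\<lambda>w. (case w of (u, v, x, z) \<Rightarrow> u, case w of (u, v, x, z) \<Rightarrow> z, ()))"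
    by (rule Hn_cong) auto
  show ?thesis
    unfolding mi_def cmi_Hn[OF p_nn] cmi_Hn[OF P_nn] Hn_const[OF p_sum] Hn_const[OF P_sum] c1 c2 c3 c4 e7
    using e5 e6 e8 by linarith
qed

lemma pVF: "pV False = 1 - pV True" using pmf_bool[OF pV] by auto
lemma pXF: "pX False = 1 - pX True" using pmf_bool[OF pX] by auto
lemma pUF: "pU False = 1 - pU True" using pmf_bool[OF pU] by auto
lemma qs: "(\<Sum>z\<in>UNIV. q a b z) = 1" using pmf_sum[OF q] by simp

lemma marg_XU: "marg p (\<lambda>w. (case w of (u, v, x, z) \<Rightarrow> x, case w of (u, v, x, z) \<Rightarrow> u)) (u,v,x,z) = pU u * pX x"
proof -
  have "marg p (\<lambda>w. (case w of (u, v, x, z) \<Rightarrow> x, case w of (u, v, x, z) \<Rightarrow> u)) (u,v,x,z)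
     = (\<Sum>i\<in>UNIV. p ((\<lambda>(v',z'). (u,v',x,z')) i))"
    by (rule marg_reindex) (auto simp: inj_def image_def)
  also have "\<dots> = (\<Sum>v'\<in>UNIV. pU u * pV v' * pX x * (\<Sum>z'\<in>UNIV. q x (max u v') z'))"
    by (simp add: sum_prod_UNIV joint_uvxz_def sum_distrib_left)
  also have "\<dots> = pU u * pX x" by (simp add: qs sum_bool pVF algebra_simps)
  finally show ?thesis .
qed

lemma marg_U: "marg p (\<lambda>(u, v, x, z). u) (u,v,x,z) = pU u"
proof -
  have "marg p (\<lambda>(u, v, x, z). u) (u,v,x,z)
     = (\<Sum>i\<in>UNIV. p ((\<lambda>(v',x',z'). (u,v',x',z')) i))"
    by (rule marg_reindex) (auto simp: inj_def image_def)
  also have "\<dots> = (\<Sum>v'\<in>UNIV. \<Sum>x'\<in>UNIV. pU u * pV v' * pX x' * (\<Sum>z'\<in>UNIV. q x' (max u v') z'))"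
    by (simp add: sum_prod_UNIV joint_uvxz_def sum_distrib_left)
  also have "\<dots> = pU u" by (simp add: qs sum_bool pVF pXF algebra_simps)
  finally show ?thesis .
qed

lemma marg_ZU: "marg p (\<lambda>w. (case w of (u, v, x, z) \<Rightarrow> z, case w of (u, v, x, z) \<Rightarrow> u)) (u,v,x,z) = pU u * sJ pX (tU pV q u) z"
proof -
  have "marg p (\<lambda>w. (case w of (u, v, x, z) \<Rightarrow> z, case w of (u, v, x, z) \<Rightarrow> u)) (u,v,x,z)
     = (\<Sum>i\<in>UNIV. p ((\<lambda>(v',x'). (u,v',x',z)) i))"
    by (rule marg_reindex) (auto simp: inj_def image_def)
  also have "\<dots> = pU u * sJ pX (tU pV q u) z"
    by (simp add: sum_prod_UNIV joint_uvxz_def sJ_def tU_def sum_bool algebra_simps)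
  finally show ?thesis .
qed

lemma marg_XZU: "marg p (\<lambda>w. (case w of (u, v, x, z) \<Rightarrow> x, case w of (u, v, x, z) \<Rightarrow> z,
            case w of (u, v, x, z) \<Rightarrow> u)) (u,v,x,z) = pU u * pX x * tU pV q u x z"
  unfolding marg_def sum4 joint_uvxz_def tU_def
  by (cases u; cases x) (simp_all add: sum.distrib sum_bool algebra_simps)

lemma tU_ge: "pV v * q x (max u v) z \<le> tU pV q u x z"
proof -
  have "0 \<le> pV v' * q x (max u v') z" for v' using pV q by (simp add: pmf_nn)
  then show ?thesis unfolding tU_def
    by (intro member_le_sum[where f="\<lambda>v. pV v * q x (max u v) z"]) auto
qed

lemma sJ_ge: assumes "\<And>x z. 0 \<le> t x z" shows "pX x * t x z \<le> sJ pX t z"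
proof -
  have "0 \<le> pX x' * t x' z" for x' using pX assms by (simp add: pmf_nn)
  then show ?thesis unfolding sJ_def
    by (intro member_le_sum[where f="\<lambda>x. pX x * t x z"]) auto
qed

lemma tU_nn: "0 \<le> tU pV q u x z"
  unfolding tU_def using pV q by (auto simp: pmf_nn intro!: sum_nonneg)

lemma R1_step1: "cmi p (\<lambda>(u,v,x,z). x) (\<lambda>(u,v,x,z). z) (\<lambda>(u,v,x,z). u) =
  (\<Sum>w\<in>UNIV. p w * (case w of (u,v,x,z) \<Rightarrow> log 2 (tU pV q u x z) - log 2 (sJ pX (tU pV q u) z)))"
  unfolding cmi_alt[OF p_nn]
  apply (rule sum.cong[OF refl])
  apply clarify
  subgoal for u v x z
  proof (cases "p (u,v,x,z) = 0")
    case False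
    have nn: "0 \<le> pU u" "0 \<le> pV v" "0 \<le> pX x" "0 \<le> q x (max u v) z"
      using pU pV pX q by (auto simp: pmf_nn)
    have "pU u \<noteq> 0" "pV v \<noteq> 0" "pX x \<noteq> 0" "q x (max u v) z \<noteq> 0"
      using False by (auto simp: joint_uvxz_def)
    with nn have pos: "pU u > 0" "pV v > 0" "pX x > 0" "q x (max u v) z > 0" by auto
    have t: "tU pV q u x z > 0" using tU_ge[of v x u z] pos by (smt (verit) mult_pos_pos)
    have sj: "sJ pX (tU pV q u) z > 0" using sJ_ge[of "tU pV q u" x z, OF tU_nn] pos t
      by (smt (verit) mult_pos_pos)
    show ?thesis unfolding marg_XZU marg_U marg_XU marg_ZU using pos t sj
      by (simp add: log_mult)
  qed simp
  done

lemma R1_step2: "(\<Sum>w\<in>UNIV. p w * (case w of (u,v,x,z) \<Rightarrow> log 2 (tU pV q u x z) - log 2 (sJ pX (tU pV q u) z)))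
   = pU True * J pX (tU pV q True) + pU False * J pX (tU pV q False)"
proof -
  define L where "L u x z = log 2 (tU pV q u x z) - log 2 (sJ pX (tU pV q u) z)" for u x z
  have "(\<Sum>w\<in>UNIV. p w * (case w of (u,v,x,z) \<Rightarrow> log 2 (tU pV q u x z) - log 2 (sJ pX (tU pV q u) z)))
     = (\<Sum>u\<in>UNIV. \<Sum>v\<in>UNIV. \<Sum>x\<in>UNIV. \<Sum>z\<in>UNIV. pU u * (pV v * pX x * q x (max u v) z * L u x z))"
    by (simp add: sum_prod_UNIV joint_uvxz_def L_def mult.assoc)
  also have "\<dots> = (\<Sum>u\<in>UNIV. pU u * J pX (tU pV q u))"
  proof (rule sum.cong[OF refl])
    fix u
    have "(\<Sum>v\<in>UNIV. \<Sum>x\<in>UNIV. \<Sum>z\<in>UNIV. pU u * (pV v * pX x * q x (max u v) z * L u x z))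
       = pU u * (\<Sum>x\<in>UNIV. \<Sum>z\<in>UNIV. \<Sum>v\<in>UNIV. pV v * pX x * q x (max u v) z * L u x z)"
      by (simp add: sum_bool sum.distrib algebra_simps flip: sum_distrib_left)
    also have "\<dots> = pU u * J pX (tU pV q u)"
      unfolding J_def L_def tU_def by (simp add: sum_distrib_left sum_distrib_right sum_subtractf algebra_simps)
    finally show "(\<Sum>v\<in>UNIV. \<Sum>x\<in>UNIV. \<Sum>z\<in>UNIV. pU u * (pV v * pX x * q x (max u v) z * L u x z))
       = pU u * J pX (tU pV q u)" .
  qed
  also have "\<dots> = pU True * J pX (tU pV q True) + pU False * J pX (tU pV q False)" by (simp add: sum_bool)
  finally show ?thesis .
qed

lemma pYF: "pY False = 1 - pY True" using pmf_bool[OF pY] by auto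

lemma mP_XZ: "marg P (\<lambda>w. (case w of (x, y, z) \<Rightarrow> x, case w of (x, y, z) \<Rightarrow> z, ())) (x,y,z)
   = pX x * (\<Sum>y'\<in>UNIV. pY y' * q x y' z)"
proof -
  have "marg P (\<lambda>w. (case w of (x, y, z) \<Rightarrow> x, case w of (x, y, z) \<Rightarrow> z, ())) (x,y,z)
     = (\<Sum>i\<in>UNIV. P ((\<lambda>y'. (x,y',z)) i))"
    by (rule marg_reindex) (auto simp: inj_def image_def)
  then show ?thesis by (simp add: joint_xyz_def sum_bool algebra_simps)
qed

lemma mP_1: "marg P (\<lambda>_. ()) w = 1"
  unfolding marg_def using P_sum by simp

lemma mP_X: "marg P (\<lambda>w. (case w of (x, y, z) \<Rightarrow> x, ())) (x,y,z) = pX x"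
proof -
  have "marg P (\<lambda>w. (case w of (x, y, z) \<Rightarrow> x, ())) (x,y,z)
     = (\<Sum>i\<in>UNIV. P ((\<lambda>(y',z'). (x,y',z')) i))"
    by (rule marg_reindex) (auto simp: inj_def image_def)
  also have "\<dots> = (\<Sum>y'\<in>UNIV. pX x * pY y' * (\<Sum>z'\<in>UNIV. q x y' z'))"
    by (simp add: sum_prod_UNIV joint_xyz_def sum_distrib_left)
  also have "\<dots> = pX x" by (simp add: qs sum_bool pYF algebra_simps)
  finally show ?thesis .
qed

lemma mP_Z: "marg P (\<lambda>w. (case w of (x, y, z) \<Rightarrow> z, ())) (x,y,z) = sJ pX (\<lambda>x z. \<Sum>y'\<in>UNIV. pY y' * q x y' z) z"
proof -
  have "marg P (\<lambda>w. (case w of (x, y, z) \<Rightarrow> z, ())) (x,y,z)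
     = (\<Sum>i\<in>UNIV. P ((\<lambda>(x',y'). (x',y',z)) i))"
    by (rule marg_reindex) (auto simp: inj_def image_def)
  then show ?thesis by (simp add: sum_prod_UNIV joint_xyz_def sJ_def sum_bool algebra_simps)
qed

lemma mP_Y: "marg P (\<lambda>(x, y, z). y) (x,y,z) = pY y"
proof -
  have "marg P (\<lambda>(x, y, z). y) (x,y,z)
     = (\<Sum>i\<in>UNIV. P ((\<lambda>(x',z'). (x',y,z')) i))"
    by (rule marg_reindex) (auto simp: inj_def image_def)
  also have "\<dots> = (\<Sum>x'\<in>UNIV. pX x' * pY y * (\<Sum>z'\<in>UNIV. q x' y z'))"
    by (simp add: sum_prod_UNIV joint_xyz_def sum_distrib_left)
  also have "\<dots> = pY y" by (simp add: qs sum_bool pXF algebra_simps)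
  finally show ?thesis .
qed

lemma mP_XY: "marg P (\<lambda>w. (case w of (x, y, z) \<Rightarrow> x, case w of (x, y, z) \<Rightarrow> y)) (x,y,z) = pX x * pY y"
proof -
  have "marg P (\<lambda>w. (case w of (x, y, z) \<Rightarrow> x, case w of (x, y, z) \<Rightarrow> y)) (x,y,z)
     = (\<Sum>i\<in>UNIV. P ((\<lambda>z'. (x,y,z')) i))"
    by (rule marg_reindex) (auto simp: inj_def image_def)
  then show ?thesis by (simp add: joint_xyz_def qs flip: sum_distrib_left)
qed

lemma mP_ZY: "marg P (\<lambda>w. (case w of (x, y, z) \<Rightarrow> z, case w of (x, y, z) \<Rightarrow> y)) (x,y,z) = pY y * sJ pX (\<lambda>x z. q x y z) z"
proof -
  have "marg P (\<lambda>w. (case w of (x, y, z) \<Rightarrow> z, case w of (x, y, z) \<Rightarrow> y)) (x,y,z)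
     = (\<Sum>i\<in>UNIV. P ((\<lambda>x'. (x',y,z)) i))"
    by (rule marg_reindex) (auto simp: inj_def image_def)
  then show ?thesis by (simp add: joint_xyz_def sJ_def sum_bool algebra_simps)
qed

lemma mP_XZY: "marg P (\<lambda>w. (case w of (x, y, z) \<Rightarrow> x, case w of (x, y, z) \<Rightarrow> z, case w of (x, y, z) \<Rightarrow> y)) w = P w"
  by (rule marg_inj) auto

lemma MI_P: "mi P (\<lambda>(x,y,z). x) (\<lambda>(x,y,z). z) = J pX (\<lambda>x z. \<Sum>y'\<in>UNIV. pY y' * q x y' z)"
proof -
  define T where "T = (\<lambda>x z. \<Sum>y'\<in>UNIV. pY y' * q x y' z)"
  have Tnn: "0 \<le> T x z" for x z unfolding T_def using pY q by (auto simp: pmf_nn intro!: sum_nonneg)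
  have "mi P (\<lambda>(x,y,z). x) (\<lambda>(x,y,z). z) = (\<Sum>w\<in>UNIV. P w * (case w of (x,y,z) \<Rightarrow> log 2 (T x z) - log 2 (sJ pX T z)))"
    unfolding mi_def cmi_alt[OF P_nn]
    apply (rule sum.cong[OF refl])
    apply clarify
    subgoal for x y z
    proof (cases "P (x,y,z) = 0")
      case False
      have nn: "0 \<le> pX x" "0 \<le> pY y" "0 \<le> q x y z"
        using pY pX q by (auto simp: pmf_nn)
      have "pX x \<noteq> 0" "pY y \<noteq> 0" "q x y z \<noteq> 0"
        using False by (auto simp: joint_xyz_def)
      with nn have pos: "pX x > 0" "pY y > 0" "q x y z > 0" by auto
      have "0 \<le> pY y' * q x y' z" for y' using pY q by (simp add: pmf_nn)
      then have "pY y * q x y z \<le> T x z" unfolding T_def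
        by (intro member_le_sum[where f="\<lambda>y. pY y * q x y z"]) auto
      then have t: "T x z > 0" using pos by (smt (verit) mult_pos_pos)
      have sj: "sJ pX T z > 0" using sJ_ge[of T x z, OF Tnn] pos t
        by (smt (verit) mult_pos_pos)
      show ?thesis unfolding mP_XZ mP_1 mP_X mP_Z using pos t sj
        by (simp add: log_mult T_def)
    qed simp
    done
  also have "\<dots> = (\<Sum>x\<in>UNIV. \<Sum>y\<in>UNIV. \<Sum>z\<in>UNIV. pX x * pY y * q x y z * (log 2 (T x z) - log 2 (sJ pX T z)))"
    by (simp add: sum_prod_UNIV joint_xyz_def)
  also have "\<dots> = J pX T"
    unfolding J_def T_def by (simp add: sum_bool sum.distrib sum_distrib_left sum_distrib_right sum_subtractf algebra_simps)
  finally show ?thesis unfolding T_def .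
qed

lemma CMI_P: "cmi P (\<lambda>(x,y,z). x) (\<lambda>(x,y,z). z) (\<lambda>(x,y,z). y) =
   pY True * J pX (\<lambda>x z. q x True z) + pY False * J pX (\<lambda>x z. q x False z)"
proof -
  have "cmi P (\<lambda>(x,y,z). x) (\<lambda>(x,y,z). z) (\<lambda>(x,y,z). y) = (\<Sum>w\<in>UNIV. P w * (case w of (x,y,z) \<Rightarrow> log 2 (q x y z) - log 2 (sJ pX (\<lambda>x z. q x y z) z)))"
    unfolding cmi_alt[OF P_nn]
    apply (rule sum.cong[OF refl])
    apply clarify
    subgoal for x y z
    proof (cases "P (x,y,z) = 0")
      case False
      have nn: "0 \<le> pX x" "0 \<le> pY y" "0 \<le> q x y z"
        using pY pX q by (auto simp: pmf_nn)
      have "pX x \<noteq> 0" "pY y \<noteq> 0" "q x y z \<noteq> 0"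
        using False by (auto simp: joint_xyz_def)
      with nn have pos: "pX x > 0" "pY y > 0" "q x y z > 0" by auto
      have "0 \<le> q x' y z'" for x' z' using q by (simp add: pmf_nn)
      then have "pX x * q x y z \<le> sJ pX (\<lambda>x z. q x y z) z" using sJ_ge[of "\<lambda>x z. q x y z" x z] by simp
      then have sj: "sJ pX (\<lambda>x z. q x y z) z > 0" using pos
        by (smt (verit) mult_pos_pos)
      show ?thesis unfolding mP_XZY mP_Y mP_XY mP_ZY using pos sj
        by (simp add: log_mult joint_xyz_def)
    qed simp
    done
  also have "\<dots> = (\<Sum>y\<in>UNIV. pY y * (\<Sum>x\<in>UNIV. \<Sum>z\<in>UNIV. pX x * q x y z * (log 2 (q x y z) - log 2 (sJ pX (\<lambda>x z. q x y z) z))))"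
    by (simp add: sum_prod_UNIV joint_xyz_def sum_bool sum.distrib sum_distrib_left algebra_simps)
  also have "\<dots> = pY True * J pX (\<lambda>x z. q x True z) + pY False * J pX (\<lambda>x z. q x False z)"
    unfolding J_def by (simp add: sum_bool)
  finally show ?thesis .
qed

lemma tU_T: "tU pV q True = mb q 1"
  unfolding tU_def mb_def by (intro ext) (simp add: sum_bool pVF algebra_simps)

lemma tU_F: "tU pV q False = mb q (pV True)"
  unfolding tU_def mb_def by (intro ext) (simp add: sum_bool pVF algebra_simps)

lemma R1: "cmi p (\<lambda>(u,v,x,z). x) (\<lambda>(u,v,x,z). z) (\<lambda>(u,v,x,z). u) =
   (1 - pU False) * J pX (mb q 1) + pU False * J pX (mb q (pV True))"
  unfolding R1_step1 R1_step2 tU_T tU_F using pUF by simp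

lemma MI_P': "mi P (\<lambda>(x,y,z). x) (\<lambda>(x,y,z). z) = J pX (mb q (pY True))"
proof -
  have "(\<lambda>x z. \<Sum>y'\<in>UNIV. pY y' * q x y' z) = mb q (pY True)"
    unfolding mb_def by (intro ext) (simp add: sum_bool pYF algebra_simps)
  then show ?thesis using MI_P by simp
qed

lemma CMI_P': "cmi P (\<lambda>(x,y,z). x) (\<lambda>(x,y,z). z) (\<lambda>(x,y,z). y) =
   (1 - pY False) * J pX (mb q 1) + pY False * J pX (mb q 0)"
proof -
  have "(\<lambda>x z. q x True z) = mb q 1" "(\<lambda>x z. q x False z) = mb q 0"
    unfolding mb_def by (auto intro!: ext)
  then show ?thesis using CMI_P pYF by simp
qed

lemma cY: "pY False = pU False * (1 - pV True)"
  using pY_eqs(2)[OF fd] pVF by simp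

end

lemma J_phi: "J pX t = (\<Sum>x\<in>UNIV. \<Sum>z\<in>UNIV. pX x * (t x z * log 2 (t x z))) - (\<Sum>z\<in>UNIV. sJ pX t z * log 2 (sJ pX t z))"
proof -
  have "J pX t = (\<Sum>x\<in>UNIV. \<Sum>z\<in>UNIV. pX x * (t x z * log 2 (t x z))) -
      (\<Sum>x\<in>UNIV. \<Sum>z\<in>UNIV. pX x * t x z * log 2 (sJ pX t z))"
    unfolding J_def by (simp add: sum_subtractf algebra_simps)
  also have "(\<Sum>x\<in>UNIV. \<Sum>z\<in>UNIV. pX x * t x z * log 2 (sJ pX t z)) = (\<Sum>z\<in>UNIV. sJ pX t z * log 2 (sJ pX t z))"
    unfolding sJ_def by (subst sum.swap) (simp add: sum_distrib_right)
  finally show ?thesis .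
qed

lemma Jmb_cont:
  assumes pX: "is_pmf pX" and q: "\<And>x y. is_pmf (q x y)"
  shows "continuous_on {0..1} (\<lambda>b. J pX (mb q b))"
proof -
  have mbnn: "0 \<le> mb q b x z" if "b \<in> {0..1}" for b x z
    using that pmf_nn[OF q] unfolding mb_def by (auto intro!: add_nonneg_nonneg mult_nonneg_nonneg)
  have c1: "continuous_on {0..1} (\<lambda>b. mb q b x z * log 2 (mb q b x z))" for x z
  proof (rule continuous_on_compose2[OF xlogx_cont])
    show "continuous_on {0..1} (\<lambda>b. mb q b x z)" unfolding mb_def by (intro continuous_intros)
    show "(\<lambda>b. mb q b x z) ` {0..1} \<subseteq> {0..}" using mbnn by auto
  qed
  have snn: "0 \<le> sJ pX (mb q b) z" if "b \<in> {0..1}" for b z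
    unfolding sJ_def using pmf_nn[OF pX] mbnn[OF that] by (auto intro!: sum_nonneg)
  have c2: "continuous_on {0..1} (\<lambda>b. sJ pX (mb q b) z * log 2 (sJ pX (mb q b) z))" for z
  proof (rule continuous_on_compose2[OF xlogx_cont])
    show "continuous_on {0..1} (\<lambda>b. sJ pX (mb q b) z)" unfolding sJ_def mb_def by (intro continuous_intros)
    show "(\<lambda>b. sJ pX (mb q b) z) ` {0..1} \<subseteq> {0..}" using snn by auto
  qed
  show ?thesis unfolding J_phi
    by (intro continuous_intros c1 c2)
qed

lemma cont_eq: "continuous_on S f \<Longrightarrow> (\<And>x. x \<in> S \<Longrightarrow> f x = g x) \<Longrightarrow> continuous_on S g"
  using continuous_on_cong[of S S f g] by auto

theorem lemma1:
  fixes pX pY :: "bool \<Rightarrow> real"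
    and q :: "bool \<Rightarrow> bool \<Rightarrow> 'z::finite \<Rightarrow> real"
    and pU pV :: "real \<Rightarrow> bool \<Rightarrow> real"
  assumes pX: "is_pmf pX" and pY: "is_pmf pY"
    and q: "\<And>x y. is_pmf (q x y)"
    and pU: "\<And>e. e \<in> {0..1} \<Longrightarrow> is_pmf (pU e)"
    and pV: "\<And>e. e \<in> {0..1} \<Longrightarrow> is_pmf (pV e)"
    and f_distr: "\<And>e y. e \<in> {0..1} \<Longrightarrow>
        pY y = (\<Sum>(u, v)\<in>UNIV. if max u v = y then pU e u * pV e v else 0)"
    and cont: "\<And>y u. continuous_on {0..1}
        (\<lambda>e. \<Sum>v\<in>UNIV. if max u v = y then pV e v else 0)"
    and U0: "pU 0 True = 0"
    and V1: "pV 1 True = 0"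
    and U1: "pU 1 False * pV 1 True = 0"
    and V0: "pU 0 True * pV 0 False = 0"
  shows "(\<forall>e\<in>{0..1}.
           mi (joint_xyz pX pY q) (\<lambda>(x, y, z). (x, y)) (\<lambda>(x, y, z). z) =
             cmi (joint_uvxz (pU e) (pV e) pX q) (\<lambda>(u, v, x, z). x) (\<lambda>(u, v, x, z). z) (\<lambda>(u, v, x, z). u)
           + mi (joint_uvxz (pU e) (pV e) pX q) (\<lambda>(u, v, x, z). u) (\<lambda>(u, v, x, z). z)
           + cmi (joint_uvxz (pU e) (pV e) pX q) (\<lambda>(u, v, x, z). v) (\<lambda>(u, v, x, z). z) (\<lambda>(u, v, x, z). (u, x)))
       \<and> continuous_on {0..1}
           (\<lambda>e. cmi (joint_uvxz (pU e) (pV e) pX q) (\<lambda>(u, v, x, z). x) (\<lambda>(u, v, x, z). z) (\<lambda>(u, v, x, z). u))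
       \<and> {mi (joint_xyz pX pY q) (\<lambda>(x, y, z). x) (\<lambda>(x, y, z). z) ..
          cmi (joint_xyz pX pY q) (\<lambda>(x, y, z). x) (\<lambda>(x, y, z). z) (\<lambda>(x, y, z). y)}
         \<subseteq> (\<lambda>e. cmi (joint_uvxz (pU e) (pV e) pX q) (\<lambda>(u, v, x, z). x) (\<lambda>(u, v, x, z). z) (\<lambda>(u, v, x, z). u)) ` {0..1}"
proof -
  have inst: "ctx (pU e) (pV e) pX pY q" if "e \<in> {0..1}" for e
    by (rule ctx.intro[OF pU[OF that] pV[OF that] pX pY q f_distr[OF that]])
  define R where "R = (\<lambda>e. cmi (joint_uvxz (pU e) (pV e) pX q) (\<lambda>(u, v, x, z). x) (\<lambda>(u, v, x, z). z) (\<lambda>(u, v, x, z). u))"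
  define J1 where "J1 = J pX (mb q 1)"
  define Jb where "Jb b = J pX (mb q b)" for b
  define a where "a e = pU e False" for e
  define b where "b e = pV e True" for e
  have R_eq: "R e = (1 - a e) * J1 + a e * Jb (b e)" if "e \<in> {0..1}" for e
    using ctx.R1[OF inst[OF that]] unfolding R_def J1_def Jb_def a_def b_def by simp
  have cY: "pY False = a e * (1 - b e)" if "e \<in> {0..1}" for e
    using ctx.cY[OF inst[OF that]] unfolding a_def b_def by simp
  have b01: "0 \<le> b e \<and> b e \<le> 1" if "e \<in> {0..1}" for e
    using pmf_nn[OF pV[OF that], of True] pmf_nn[OF pV[OF that], of False] pmf_bool[OF pV[OF that]]
    unfolding b_def by simp
  have a01: "0 \<le> a e \<and> a e \<le> 1" if "e \<in> {0..1}" for e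
    using pmf_nn[OF pU[OF that], of True] pmf_nn[OF pU[OF that], of False] pmf_bool[OF pU[OF that]]
    unfolding a_def by simp
  have bcont: "continuous_on {0..1} b"
  proof -
    have eq: "(\<lambda>e. \<Sum>v\<in>UNIV. if max False v = True then pV e v else 0) = b"
      by (intro ext) (simp add: sum_bool b_def)
    show ?thesis using cont[where y=True and u=False] unfolding eq .
  qed
  have Jbc: "continuous_on {0..1} (\<lambda>e. Jb (b e))"
    unfolding Jb_def
    by (rule continuous_on_compose2[OF Jmb_cont[OF pX q] bcont]) (use b01 in auto)
  have cnn: "0 \<le> pY False" using pmf_nn[OF pY] by simp
  have Rcont: "continuous_on {0..1} R"
  proof (cases "pY False = 0")
    case True
    have "R e = J1" if "e \<in> {0..1}" for e
    proof -
      have "a e = 0 \<or> b e = 1" using cY[OF that] True by simp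
      moreover have "R e = J1" if "a e = 0" using R_eq[OF \<open>e \<in> {0..1}\<close>] that by simp
      moreover have "R e = J1" if "b e = 1" using R_eq[OF \<open>e \<in> {0..1}\<close>] that
        unfolding Jb_def J1_def by (simp add: algebra_simps)
      ultimately show ?thesis by blast
    qed
    then show ?thesis by (intro cont_eq[OF continuous_on_const[of "{0..1}" J1]]) auto
  next
    case False
    then have cpos: "pY False > 0" using cnn by simp
    have nz: "1 - b e \<noteq> 0" if "e \<in> {0..1}" for e using cY[OF that] cpos by auto
    have "R e = (1 - pY False / (1 - b e)) * J1 + pY False / (1 - b e) * Jb (b e)" if "e \<in> {0..1}" for e
      using R_eq[OF that] cY[OF that] nz[OF that] by simp
    moreover have "continuous_on {0..1} (\<lambda>e. (1 - pY False / (1 - b e)) * J1 + pY False / (1 - b e) * Jb (b e))"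
    proof -
      have d: "continuous_on {0..1} (\<lambda>e. pY False / (1 - b e))"
        by (rule continuous_on_divide[OF continuous_on_const continuous_on_diff[OF continuous_on_const bcont]])
          (use nz in auto)
      show ?thesis
        by (rule continuous_on_add[OF continuous_on_mult[OF continuous_on_diff[OF continuous_on_const d] continuous_on_const] continuous_on_mult[OF d Jbc]])
    qed
    ultimately show ?thesis by (intro cont_eq[of "{0..1}" "\<lambda>e. (1 - pY False / (1 - b e)) * J1 + pY False / (1 - b e) * Jb (b e)" R]) auto
  qed
  have R0: "R 0 = mi (joint_xyz pX pY q) (\<lambda>(x, y, z). x) (\<lambda>(x, y, z). z)"
  proof -
    have e0: "(0::real) \<in> {0..1}" by simp
    have "a 0 = 1" using U0 pmf_bool[OF pU[OF e0]] unfolding a_def by simp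
    then have "b 0 = pY True" using cY[OF e0] pmf_bool[OF pY] by simp
    then show ?thesis using R_eq[OF e0] \<open>a 0 = 1\<close> ctx.MI_P'[OF inst[OF e0]] unfolding Jb_def by simp
  qed
  have R1: "R 1 = cmi (joint_xyz pX pY q) (\<lambda>(x, y, z). x) (\<lambda>(x, y, z). z) (\<lambda>(x, y, z). y)"
  proof -
    have e1: "(1::real) \<in> {0..1}" by simp
    have "b 1 = 0" using V1 unfolding b_def by simp
    then have "a 1 = pY False" using cY[OF e1] by simp
    then show ?thesis using R_eq[OF e1] \<open>b 1 = 0\<close> ctx.CMI_P'[OF inst[OF e1]] unfolding Jb_def J1_def by simp
  qed
  have img: "{R 0 .. R 1} \<subseteq> R ` {0..1}"
  proof
    fix y assume "y \<in> {R 0 .. R 1}"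
    then obtain x where "0 \<le> x" "x \<le> 1" "R x = y" using IVT'[of R 0 y 1, OF _ _ _ Rcont] by auto
    then show "y \<in> R ` {0..1}" by force
  qed
  have ch: "\<forall>e\<in>{0..1}.
           mi (joint_xyz pX pY q) (\<lambda>(x, y, z). (x, y)) (\<lambda>(x, y, z). z) =
             cmi (joint_uvxz (pU e) (pV e) pX q) (\<lambda>(u, v, x, z). x) (\<lambda>(u, v, x, z). z) (\<lambda>(u, v, x, z). u)
           + mi (joint_uvxz (pU e) (pV e) pX q) (\<lambda>(u, v, x, z). u) (\<lambda>(u, v, x, z). z)
           + cmi (joint_uvxz (pU e) (pV e) pX q) (\<lambda>(u, v, x, z). v) (\<lambda>(u, v, x, z). z) (\<lambda>(u, v, x, z). (u, x))"
  proof (intro ballI)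
    fix e :: real assume "e \<in> {0..1}"
    then show "mi (joint_xyz pX pY q) (\<lambda>(x, y, z). (x, y)) (\<lambda>(x, y, z). z) =
             cmi (joint_uvxz (pU e) (pV e) pX q) (\<lambda>(u, v, x, z). x) (\<lambda>(u, v, x, z). z) (\<lambda>(u, v, x, z). u)
           + mi (joint_uvxz (pU e) (pV e) pX q) (\<lambda>(u, v, x, z). u) (\<lambda>(u, v, x, z). z)
           + cmi (joint_uvxz (pU e) (pV e) pX q) (\<lambda>(u, v, x, z). v) (\<lambda>(u, v, x, z). z) (\<lambda>(u, v, x, z). (u, x))"
      by (rule ctx.chain[OF inst])
  qed
  have Rc': "continuous_on {0..1}
           (\<lambda>e. cmi (joint_uvxz (pU e) (pV e) pX q) (\<lambda>(u, v, x, z). x) (\<lambda>(u, v, x, z). z) (\<lambda>(u, v, x, z). u))"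
    using Rcont unfolding R_def .
  have img': "{mi (joint_xyz pX pY q) (\<lambda>(x, y, z). x) (\<lambda>(x, y, z). z) ..
          cmi (joint_xyz pX pY q) (\<lambda>(x, y, z). x) (\<lambda>(x, y, z). z) (\<lambda>(x, y, z). y)}
         \<subseteq> (\<lambda>e. cmi (joint_uvxz (pU e) (pV e) pX q) (\<lambda>(u, v, x, z). x) (\<lambda>(u, v, x, z). z) (\<lambda>(u, v, x, z). u)) ` {0..1}"
    using img unfolding R0 R1 unfolding R_def .
  show ?thesis by (intro conjI ch Rc' img')
qed

end
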